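(* Let $d\ge 1$, $k\ge 1$, $m\ge 1$ and $n>k$ be integers. Let $C\subseteq\mathbb{R}^d$ be a set containing a line segment between two distinct points. Let $f:(\mathbb{R}^d)^k\to\mathbb{R}^m$ be a continuous piecewise linear (CPwL) function, and let $F:(\mathbb{R}^d)^n\to\mathbb{R}^m$ be its $k$-ary Janossy pooling, \[F(\mathbf{x}_1,\dots,\mathbf{x}_n)=\frac{1}{(n-k)!}\sum_{\pi\in S_n} f\big(\mathbf{x}_{\pi(1)},\dots,\mathbf{x}_{\pi(k)}\big).\] Then $F$, viewed as a function on the multiset space $\mathcal{M}_n(C)$, is not injective; that is, there exist two distinct multisets $\{\mathbf{w}_1,\dots,\mathbf{w}_n\}\neq\{\mathbf{w}'_1,\dots,\mathbf{w}'_n\}$ of $n$ elements of $C$ with $F(\mathbf{w}_1,\dots,\mathbf{w}_n)=F(\mathbf{w}'_1,\dots,\mathbf{w}'_n)$.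
   Context: A (closed, convex) polytope in $\mathbb{R}^N$ is a set of the form $\{\mathbf{x}\in\mathbb{R}^N : \mathbf{a}_j\cdot\mathbf{x}+b_j\ge 0,\ j=1,\dots,J\}$ for finitely many $\mathbf{a}_j\in\mathbb{R}^N$, $b_j\in\mathbb{R}$ (not necessarily bounded). A partition of $\mathbb{R}^N$ is a finite collection of polytopes with nonempty interior whose union is $\mathbb{R}^N$ and whose interiors are pairwise disjoint. A function $f:\mathbb{R}^N\to\mathbb{R}^m$ is continuous piecewise linear (CPwL) if it is continuous and there is a partition of $\mathbb{R}^N$ such that the restriction of $f$ to each polytope of the partition is affine. Here $(\mathbb{R}^d)^k$ is identified with $\mathbb{R}^{dk}$. $S_n$ is the symmetric group on $\{1,\dots,n\}$. $\mathcal{M}_n(C)$ denotes the set of multisets of cardinality $n$ (unordered, repetitions allowed) with elements in $C$; a permutation-invariant function on $C^n$ is identified with a function on $\mathcal{M}_n(C)$, and $F$ as defined is permutation invariant. *)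

theory Defs
  imports "HOL-Analysis.Analysis" "HOL-Library.Multiset"
begin

definition is_polytope :: "'a::euclidean_space set \<Rightarrow> bool" where
  "is_polytope Q \<longleftrightarrow> (\<exists>(J::nat) (a::nat \<Rightarrow> 'a) (b::nat \<Rightarrow> real).
      Q = {x. \<forall>j<J. a j \<bullet> x + b j \<ge> 0})"

definition is_polytope_partition :: "'a::euclidean_space set set \<Rightarrow> bool" where
  "is_polytope_partition P \<longleftrightarrow>
     finite P \<and> (\<forall>Q\<in>P. is_polytope Q \<and> interior Q \<noteq> {}) \<and> \<Union>P = UNIV \<and>
     (\<forall>Q1\<in>P. \<forall>Q2\<in>P. Q1 \<noteq> Q2 \<longrightarrow> interior Q1 \<inter> interior Q2 = {})"

definition CPwL :: "('a::euclidean_space \<Rightarrow> 'b::euclidean_space) \<Rightarrow> bool" where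
  "CPwL f \<longleftrightarrow> continuous_on UNIV f \<and>
     (\<exists>P. is_polytope_partition P \<and>
        (\<forall>Q\<in>P. \<exists>g c. linear g \<and> (\<forall>x\<in>Q. f x = g x + c)))"

text \<open>k-ary Janossy pooling. The index set of the n inputs is the type 'k + 'e
  (so n = CARD('k) + CARD('e) > k = CARD('k)); the first k positions are Inl j.\<close>
definition janossy ::
  "(real^'d^'k \<Rightarrow> real^'m) \<Rightarrow> (('k::finite + 'e::finite) \<Rightarrow> real^'d) \<Rightarrow> real^'m" where
  "janossy f x = (1 / fact CARD('e)) *\<^sub>R
     (\<Sum>\<pi>\<in>{\<pi>. \<pi> permutes (UNIV :: ('k + 'e) set)}. f (\<chi> j. x (\<pi> (Inl j))))"

definition point_mset :: "('n::finite \<Rightarrow> 'a) \<Rightarrow> 'a multiset" where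
  "point_mset x = image_mset x (mset_set UNIV)"

end

theory Submission imports Defs begin

lemma kernel_exists:
  fixes \<Phi> :: "real^'n \<Rightarrow> real^'k"
  assumes lin: "linear \<Phi>" and card: "CARD('k) < CARD('n)"
  shows "\<exists>x. x \<noteq> 0 \<and> \<Phi> x = 0"
proof (rule ccontr)
  assume "\<not> ?thesis"
  then have "inj \<Phi>" using linear_injective_0[OF lin] by blast
  then have "dim (\<Phi> ` UNIV) = dim (UNIV :: (real^'n) set)"
    using eucl.dim_image_eq[OF lin] by (metis inj_on_subset subset_UNIV)
  moreover have "dim (\<Phi> ` UNIV) \<le> DIM(real^'k)" by (rule dim_subset_UNIV)
  ultimately have "CARD('n) \<le> CARD('k)" by (simp add: dim_UNIV)
  then show False using card by simp
qed

definition rk :: "('k::finite \<Rightarrow> nat) \<Rightarrow> 'k \<Rightarrow> nat" where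
  "rk g j = card {j'. g j' < g j}"

lemma rk_mono:
  fixes g :: "'k::finite \<Rightarrow> nat"
  assumes "inj g"
  shows "(g j < g j') = (rk g j < rk g j')"
proof
  assume "g j < g j'"
  then have "{x. g x < g j} \<subset> {x. g x < g j'}" by auto
  then show "rk g j < rk g j'" unfolding rk_def by (simp add: psubset_card_mono)
next
  assume a: "rk g j < rk g j'"
  show "g j < g j'"
  proof (rule ccontr)
    assume "\<not> g j < g j'"
    then have "{x. g x < g j'} \<subseteq> {x. g x < g j}" by auto
    then have "rk g j' \<le> rk g j" unfolding rk_def by (simp add: card_mono)
    with a show False by simp
  qed
qed

lemma rk_inj:
  fixes g :: "'k::finite \<Rightarrow> nat"
  assumes "inj g" shows "inj (rk g)"
proof (rule injI)
  fix x y assume "rk g x = rk g y"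
  then have "\<not> g x < g y" "\<not> g y < g x" using rk_mono[OF assms] by auto
  then have "g x = g y" by simp
  then show "x = y" using assms by (simp add: inj_eq)
qed

lemma rk_range:
  fixes g :: "'k::finite \<Rightarrow> nat"
  assumes "inj g" shows "range (rk g) = {..<CARD('k)}"
proof -
  have sub: "range (rk g) \<subseteq> {..<CARD('k)}"
  proof
    fix y assume "y \<in> range (rk g)"
    then obtain j where y: "y = rk g j" by auto
    have "{j'. g j' < g j} \<subset> UNIV" by auto
    then have "card {j'. g j' < g j} < CARD('k)" by (simp add: psubset_card_mono)
    then show "y \<in> {..<CARD('k)}" using y unfolding rk_def by simp
  qed
  have "card (range (rk g)) = CARD('k)" using rk_inj[OF assms] by (simp add: card_image)
  then show ?thesis using sub by (simp add: card_subset_eq)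
qed

lemma order_iso:
  fixes g0 g1 :: "'k::finite \<Rightarrow> nat"
  assumes i0: "inj g0" and i1: "inj g1"
  shows "\<exists>\<sigma>. bij \<sigma> \<and> (\<forall>j j'. (g1 j < g1 j') = (g0 (\<sigma> j) < g0 (\<sigma> j')))"
proof -
  define \<sigma> where "\<sigma> = inv (rk g0) \<circ> rk g1"
  have b0: "bij_betw (rk g0) UNIV {..<CARD('k)}" using rk_inj[OF i0] rk_range[OF i0]
    by (simp add: bij_betw_def)
  have b1: "bij_betw (rk g1) UNIV {..<CARD('k)}" using rk_inj[OF i1] rk_range[OF i1]
    by (simp add: bij_betw_def)
  have "bij_betw (inv (rk g0)) {..<CARD('k)} UNIV" using b0 by (rule bij_betw_inv_into)
  then have "bij \<sigma>" unfolding \<sigma>_def using b1 bij_betw_trans by blast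
  moreover have r: "rk g0 (\<sigma> j) = rk g1 j" for j
  proof -
    have "rk g1 j \<in> range (rk g0)" using rk_range[OF i0] rk_range[OF i1] by blast
    then show ?thesis unfolding \<sigma>_def by (simp add: f_inv_into_f)
  qed
  moreover have "(g1 j < g1 j') = (g0 (\<sigma> j) < g0 (\<sigma> j'))" for j j'
    using rk_mono[OF i0] rk_mono[OF i1] r by simp
  ultimately show ?thesis by blast
qed

definition Pos :: "('j \<Rightarrow> real) \<Rightarrow> real \<Rightarrow> ('j \<Rightarrow> 'j \<Rightarrow> bool) \<Rightarrow> 'j set \<Rightarrow> bool" where
  "Pos \<alpha> \<beta> R S = (if \<beta> \<noteq> 0 then 0 < \<beta> else (\<forall>j\<in>S. \<alpha> j = 0) \<or>
      (\<exists>j\<in>S. 0 < \<alpha> j \<and> (\<forall>j'\<in>S. \<alpha> j' \<noteq> 0 \<longrightarrow> j' \<noteq> j \<longrightarrow> R j j')))"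

lemma lead_sign:
  fixes S :: "'j set" and \<alpha> c :: "'j \<Rightarrow> real" and e :: "'j \<Rightarrow> nat" and \<beta> :: real
  assumes fin: "finite S" and inj: "inj_on e S" and e1: "\<forall>j\<in>S. 1 \<le> e j"
    and eM: "\<forall>j\<in>S. e j < M" and M1: "1 \<le> M"
  shows "eventually (\<lambda>\<epsilon>. (0 \<le> \<beta> + (\<Sum>j\<in>S. \<alpha> j * (\<epsilon> ^ e j + c j * \<epsilon> ^ M)))
            \<longleftrightarrow> Pos \<alpha> \<beta> (\<lambda>j j'. e j < e j') S) (at_right 0)"
proof -
  define v where "v = (\<lambda>\<epsilon>::real. \<beta> + (\<Sum>j\<in>S. \<alpha> j * (\<epsilon> ^ e j + c j * \<epsilon> ^ M)))"
  have M0: "M \<noteq> 0" using M1 by simp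
  show ?thesis
  proof (cases "\<beta> = 0")
    case False
    have "(v \<longlongrightarrow> v 0) (at_right 0)" unfolding v_def
      by (intro tendsto_intros)
    moreover have "v 0 = \<beta>" unfolding v_def using e1 M0
      by (auto intro!: sum.neutral simp: power_0_left)
    ultimately have t: "(v \<longlongrightarrow> \<beta>) (at_right 0)" by simp
    show ?thesis
    proof (cases "\<beta> > 0")
      case True
      have "eventually (\<lambda>x. v x > 0) (at_right 0)" using order_tendstoD(1)[OF t True] .
      then show ?thesis by eventually_elim (use True in \<open>auto simp: v_def Pos_def\<close>)
    next
      case b: False
      then have "\<beta> < 0" using \<open>\<beta> \<noteq> 0\<close> by simp
      have "eventually (\<lambda>x. v x < 0) (at_right 0)" using order_tendstoD(2)[OF t \<open>\<beta> < 0\<close>] .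
      then show ?thesis by eventually_elim (use b \<open>\<beta> \<noteq> 0\<close> in \<open>auto simp: v_def Pos_def\<close>)
    qed
  next
    case b0: True
    show ?thesis
    proof (cases "\<forall>j\<in>S. \<alpha> j = 0")
      case True
      then show ?thesis using b0 by (simp add: Pos_def)
    next
      case False
      define T where "T = {j\<in>S. \<alpha> j \<noteq> 0}"
      have Tf: "finite T" "T \<noteq> {}" using fin False unfolding T_def by auto
      define E where "E = Min (e ` T)"
      have "E \<in> e ` T" unfolding E_def using Tf by simp
      then obtain j0 where j0T: "j0 \<in> T" and ej0: "e j0 = E" by auto
      have Emin: "\<And>j. j \<in> T \<Longrightarrow> E \<le> e j" unfolding E_def using Tf by simp
      have Estrict: "\<And>j. j \<in> T \<Longrightarrow> j \<noteq> j0 \<Longrightarrow> E < e j"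
        using Emin ej0 inj j0T unfolding T_def inj_on_def
        by (metis (mono_tags, lifting) mem_Collect_eq order_le_imp_less_or_eq)
      have a0: "\<alpha> j0 \<noteq> 0" "j0 \<in> S" using j0T T_def by auto
      have EM: "E < M" using eM a0 ej0 by auto
      have PosI: "Pos \<alpha> \<beta> (\<lambda>j j'. e j < e j') S \<longleftrightarrow> 0 < \<alpha> j0"
      proof
        assume "Pos \<alpha> \<beta> (\<lambda>j j'. e j < e j') S"
        then obtain j where j: "j \<in> S" "0 < \<alpha> j" "\<forall>j'\<in>S. \<alpha> j' \<noteq> 0 \<longrightarrow> j' \<noteq> j \<longrightarrow> e j < e j'"
          using b0 False by (auto simp: Pos_def)
        have "j = j0"
        proof (rule ccontr)
          assume "j \<noteq> j0"
          then have "e j < e j0" using j a0 by auto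
          moreover have "E \<le> e j" using Emin j T_def by auto
          ultimately show False using ej0 by simp
        qed
        then show "0 < \<alpha> j0" using j by simp
      next
        assume "0 < \<alpha> j0"
        moreover have "\<forall>j'\<in>S. \<alpha> j' \<noteq> 0 \<longrightarrow> j' \<noteq> j0 \<longrightarrow> e j0 < e j'"
          using Estrict ej0 T_def by auto
        ultimately show "Pos \<alpha> \<beta> (\<lambda>j j'. e j < e j') S" using b0 a0 by (auto simp: Pos_def)
      qed
      define h where "h = (\<lambda>\<epsilon>::real. \<Sum>j\<in>S. \<alpha> j * (\<epsilon> ^ (e j - E) + c j * \<epsilon> ^ (M - E)))"
      have vh: "v \<epsilon> = \<epsilon> ^ E * h \<epsilon>" for \<epsilon>
      proof -
        have "\<alpha> j * (\<epsilon> ^ e j + c j * \<epsilon> ^ M) = \<epsilon> ^ E * (\<alpha> j * (\<epsilon> ^ (e j - E) + c j * \<epsilon> ^ (M - E)))"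
          if "j \<in> S" for j
        proof (cases "\<alpha> j = 0")
          case False
          then have "E \<le> e j" using Emin that T_def by auto
          then have "\<epsilon> ^ e j = \<epsilon> ^ E * \<epsilon> ^ (e j - E)" "\<epsilon> ^ M = \<epsilon> ^ E * \<epsilon> ^ (M - E)"
            using EM by (simp_all flip: power_add)
          then show ?thesis by (simp add: algebra_simps)
        qed simp
        then have "(\<Sum>j\<in>S. \<alpha> j * (\<epsilon> ^ e j + c j * \<epsilon> ^ M)) = (\<Sum>j\<in>S. \<epsilon> ^ E * (\<alpha> j * (\<epsilon> ^ (e j - E) + c j * \<epsilon> ^ (M - E))))"
          by (rule sum.cong[OF refl])
        then show ?thesis unfolding v_def h_def b0 by (simp add: sum_distrib_left)
      qed
      have "(h \<longlongrightarrow> h 0) (at_right 0)" unfolding h_def by (intro tendsto_intros)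
      moreover have "h 0 = \<alpha> j0"
      proof -
        have "h 0 = (\<Sum>j\<in>S. if j = j0 then \<alpha> j0 else 0)" unfolding h_def
        proof (rule sum.cong)
          fix j assume jS: "j \<in> S"
          show "\<alpha> j * (0 ^ (e j - E) + c j * 0 ^ (M - E)) = (if j = j0 then \<alpha> j0 else 0)"
          proof (cases "\<alpha> j = 0")
            case True then show ?thesis using a0 by auto
          next
            case False
            then have "j = j0 \<or> E < e j" using Estrict jS T_def by auto
            then show ?thesis using EM ej0 by (auto simp: power_0_left)
          qed
        qed simp
        then show ?thesis using a0 fin by (simp add: sum.delta)
      qed
      ultimately have t: "(h \<longlongrightarrow> \<alpha> j0) (at_right 0)" by simp
      have epos: "eventually (\<lambda>x::real. 0 < x) (at_right 0)" by (rule eventually_at_right_less)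
      show ?thesis
      proof (cases "\<alpha> j0 > 0")
        case True
        have "eventually (\<lambda>x. h x > 0) (at_right 0)" using order_tendstoD(1)[OF t True] .
        with epos show ?thesis
          by eventually_elim (use True PosI in \<open>auto simp: vh[unfolded v_def]\<close>)
      next
        case F: False
        then have "\<alpha> j0 < 0" using a0 by simp
        have "eventually (\<lambda>x. h x < 0) (at_right 0)" using order_tendstoD(2)[OF t \<open>\<alpha> j0 < 0\<close>] .
        with epos show ?thesis
        proof eventually_elim
          case (elim x)
          then have "x ^ E * h x < 0" by (simp add: mult_pos_neg)
          then show ?case using F PosI vh[unfolded v_def, of x] by auto
        qed
      qed
    qed
  qed
qed

lemma gap:
  fixes \<epsilon> :: real
  assumes "0 < \<epsilon>" "\<epsilon> < 1/2" "p < q" "q < M"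
  shows "\<epsilon> ^ M < \<epsilon> ^ p - \<epsilon> ^ q"
proof -
  have "\<epsilon> ^ q \<le> \<epsilon> ^ Suc p" using assms by (intro power_decreasing) auto
  moreover have "\<epsilon> ^ M \<le> \<epsilon> ^ Suc p" using assms by (intro power_decreasing) auto
  moreover have "\<epsilon> ^ Suc p < \<epsilon> ^ p - \<epsilon> ^ Suc p"
  proof -
    have "0 < \<epsilon> ^ p" using assms by simp
    then have "\<epsilon> ^ p * \<epsilon> < \<epsilon> ^ p * (1 - \<epsilon>)" using assms by (intro mult_strict_left_mono) auto
    then show ?thesis by (simp add: algebra_simps)
  qed
  ultimately show ?thesis by linarith
qed

lemma inner_X:
  fixes A :: "real^'d^'k" and t :: "'k \<Rightarrow> real"
  shows "A \<bullet> (\<chi> j. a + t j *\<^sub>R v) = (\<Sum>j\<in>UNIV. A$j \<bullet> a) + (\<Sum>j\<in>UNIV. A$j \<bullet> v * t j)"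
proof -
  have "A \<bullet> (\<chi> j. a + t j *\<^sub>R v) = (\<Sum>j\<in>UNIV. A$j \<bullet> ((\<chi> j. a + t j *\<^sub>R v) $ j))"
    by (rule inner_vec_def)
  also have "\<dots> = (\<Sum>j\<in>UNIV. A$j \<bullet> a + A$j \<bullet> v * t j)"
    by (simp add: inner_add_right mult.commute)
  finally show ?thesis by (simp add: sum.distrib)
qed

lemma seg_mem:
  fixes u :: real
  assumes "0 \<le> u" "u \<le> 1"
  shows "a + u *\<^sub>R (b - a) \<in> closed_segment a b"
  unfolding closed_segment_def using assms
  by (auto intro!: exI[of _ u] simp: algebra_simps)

theorem theorem3p1:
  fixes C :: "(real^'d) set"
    and f :: "real^'d^'k \<Rightarrow> real^'m"
  assumes seg: "\<exists>a b. a \<noteq> b \<and> closed_segment a b \<subseteq> C"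
    and cpwl: "CPwL f"
  shows "\<exists>(w :: ('k::finite + 'e::finite) \<Rightarrow> real^'d) (w' :: ('k + 'e) \<Rightarrow> real^'d).
           range w \<subseteq> C \<and> range w' \<subseteq> C \<and>
           point_mset w \<noteq> point_mset w' \<and>
           janossy f w = janossy f w'"
proof -
  obtain a b where ab: "a \<noteq> b" "closed_segment a b \<subseteq> C" using seg by blast
  from cpwl obtain P where Ppart: "is_polytope_partition P"
    and Paff: "\<forall>Q\<in>P. \<exists>g c. linear g \<and> (\<forall>x\<in>Q. f x = g x + c)"
    unfolding CPwL_def by blast
  have Pfin: "finite P" and Pcov: "\<Union>P = UNIV" and Ppoly: "\<forall>Q\<in>P. is_polytope Q"
    using Ppart unfolding is_polytope_partition_def by auto
  define PS where "PS t = {x. \<forall>j<fst t. fst (snd t) j \<bullet> x + snd (snd t) j \<ge> (0::real)}"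
    for t :: "nat \<times> (nat \<Rightarrow> real^'d^'k) \<times> (nat \<Rightarrow> real)"
  have "\<forall>Q\<in>P. \<exists>t. Q = PS t"
  proof
    fix Q assume "Q \<in> P"
    then obtain J A B where "Q = {x. \<forall>j<(J::nat). (A::nat \<Rightarrow> real^'d^'k) j \<bullet> x + B j \<ge> 0}"
      using Ppoly unfolding is_polytope_def by blast
    then show "\<exists>t. Q = PS t"
      unfolding PS_def by (intro exI[of _ "(J, A, B)"]) simp
  qed
  then have "\<exists>TT. \<forall>Q\<in>P. Q = PS (TT Q)"
    by (rule bchoice)
  then obtain TT where TT: "\<forall>Q\<in>P. Q = PS (TT Q)"
    by (elim exE)
  define JJ where "JJ Q = fst (TT Q)" for Q
  define AA where "AA Q = fst (snd (TT Q))" for Q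
  define BB where "BB Q = snd (snd (TT Q))" for Q
  have poly: "\<forall>Q\<in>P. Q = {x. \<forall>j<JJ Q. AA Q j \<bullet> x + BB Q j \<ge> 0}"
    using TT unfolding JJ_def AA_def BB_def PS_def by simp
  define Perm where "Perm = {\<pi>::('k+'e) \<Rightarrow> ('k+'e). \<pi> permutes UNIV}"
  have Permfin: "finite Perm" unfolding Perm_def by (rule finite_permutations) simp
  obtain m :: "('k+'e) \<Rightarrow> nat" and N where mN: "m ` UNIV = {i. i<N}" "inj m"
    using finite_imp_inj_to_nat_seg[of "UNIV :: ('k+'e) set"] by auto
  define n where "n = CARD('k+'e)"
  have Nn: "N = n" unfolding n_def using mN card_image[of m UNIV] by simp
  define e where "e i = Suc (m i)" for i
  define M where "M = Suc n"
  have e1: "1 \<le> e i" for i unfolding e_def by simp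
  have en: "e i \<le> n" for i
  proof -
    have "m i \<in> m ` UNIV" by simp
    then show ?thesis using mN Nn unfolding e_def by auto
  qed
  have eM: "e i < M" for i using en[of i] unfolding M_def by simp
  have einj: "inj e" using mN(2) unfolding e_def inj_def by simp
  define pat where "pat \<pi> = (\<lambda>j j'. e (\<pi> (Inl j)) < e (\<pi> (Inl j')))" for \<pi> :: "('k+'e) \<Rightarrow> ('k+'e)"
  define \<Phi> :: "real^('k+'e) \<Rightarrow> real^'k" where
    "\<Phi> x = (\<chi> j. \<Sum>\<pi>\<in>Perm. if pat \<pi> = pat id then x $ (\<pi> (Inl j)) else 0)" for x
  have linP: "linear \<Phi>"
  proof (rule linearI)
    fix x y :: "real^('k+'e)"
    show "\<Phi> (x + y) = \<Phi> x + \<Phi> y"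
      unfolding \<Phi>_def vec_eq_iff
      by (auto simp: sum.distrib[symmetric] intro!: sum.cong)
  next
    fix c :: real and x :: "real^('k+'e)"
    show "\<Phi> (c *\<^sub>R x) = c *\<^sub>R \<Phi> x"
      unfolding \<Phi>_def vec_eq_iff
      by (auto simp: sum_distrib_left intro!: sum.cong)
  qed
  have cardlt: "CARD('k) < CARD('k+'e)" by (simp add: card_sum)
  obtain x0 where l0: "x0 \<noteq> 0" "\<Phi> x0 = 0" using kernel_exists[OF linP cardlt] by blast
  define \<mu> where "\<mu> = x0 /\<^sub>R norm x0"
  have mu0: "\<mu> \<noteq> 0" using l0 unfolding \<mu>_def by simp
  have mub: "\<bar>\<mu> $ i\<bar> \<le> 1" for i
  proof -
    have "norm \<mu> = 1" using l0 unfolding \<mu>_def by simp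
    then show ?thesis using component_le_norm_cart[of \<mu> i] by simp
  qed
  have Phimu: "\<Phi> \<mu> = 0" unfolding \<mu>_def linear_scale[OF linP] l0(2) by simp
  have K: "(\<Sum>\<pi>\<in>Perm. if pat \<pi> = pat \<pi>1 then \<mu> $ (\<pi> (Inl j)) else 0) = 0"
    if \<pi>1: "\<pi>1 \<in> Perm" for \<pi>1 j
  proof -
    have bij1: "bij \<pi>1" using \<pi>1 unfolding Perm_def by (simp add: permutes_bij)
    have i1: "inj (e \<circ> \<pi>1 \<circ> Inl)" using einj bij_is_inj[OF bij1]
      by (auto simp: inj_def)
    have i0: "inj (e \<circ> Inl)" using einj by (auto simp: inj_def)
    obtain \<sigma> where \<sigma>: "bij \<sigma>"
      "\<forall>j j'. ((e \<circ> \<pi>1 \<circ> Inl) j < (e \<circ> \<pi>1 \<circ> Inl) j') = ((e \<circ> Inl) (\<sigma> j) < (e \<circ> Inl) (\<sigma> j'))"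
      using order_iso[OF i0 i1] by blast
    define \<sigma>h :: "('k+'e) \<Rightarrow> ('k+'e)" where "\<sigma>h = map_sum \<sigma> id"
    have c1: "map_sum (inv \<sigma>) id \<circ> \<sigma>h = id"
      unfolding \<sigma>h_def fun_eq_iff using bij_is_inj[OF \<sigma>(1)]
      by (intro allI, case_tac x) (auto simp: inv_f_f)
    have c2: "\<sigma>h \<circ> map_sum (inv \<sigma>) id = id"
      unfolding \<sigma>h_def fun_eq_iff using bij_is_surj[OF \<sigma>(1)]
      by (intro allI, case_tac x) (auto simp: surj_f_inv_f)
    have "bij \<sigma>h" using o_bij[OF c1 c2] .
    then have \<sigma>hp: "\<sigma>h permutes UNIV" by (intro bij_imp_permutes) (auto simp: bij_def)
    have p1: "pat \<pi>1 j1 j2 = pat id (\<sigma> j1) (\<sigma> j2)" for j1 j2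
      using \<sigma>(2) unfolding pat_def by simp
    have patc: "pat (\<pi> \<circ> \<sigma>h) = pat \<pi>1 \<longleftrightarrow> pat \<pi> = pat id" for \<pi>
    proof
      assume a: "pat (\<pi> \<circ> \<sigma>h) = pat \<pi>1"
      show "pat \<pi> = pat id"
      proof (intro ext)
        fix x y
        have "pat \<pi> x y = pat (\<pi> \<circ> \<sigma>h) (inv \<sigma> x) (inv \<sigma> y)"
          unfolding pat_def \<sigma>h_def using bij_is_surj[OF \<sigma>(1)] by (simp add: surj_f_inv_f)
        also have "\<dots> = pat id (\<sigma> (inv \<sigma> x)) (\<sigma> (inv \<sigma> y))" using a p1 by simp
        also have "\<dots> = pat id x y" using bij_is_surj[OF \<sigma>(1)] by (simp add: surj_f_inv_f)
        finally show "pat \<pi> x y = pat id x y" .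
      qed
    next
      assume a: "pat \<pi> = pat id"
      show "pat (\<pi> \<circ> \<sigma>h) = pat \<pi>1"
      proof (intro ext)
        fix x y
        have "pat (\<pi> \<circ> \<sigma>h) x y = pat \<pi> (\<sigma> x) (\<sigma> y)"
          unfolding pat_def \<sigma>h_def by simp
        then show "pat (\<pi> \<circ> \<sigma>h) x y = pat \<pi>1 x y" using a p1 by simp
      qed
    qed
    have "(\<Sum>\<pi>\<in>Perm. if pat \<pi> = pat \<pi>1 then \<mu> $ (\<pi> (Inl j)) else 0)
        = (\<Sum>\<pi>\<in>Perm. if pat (\<pi> \<circ> \<sigma>h) = pat \<pi>1 then \<mu> $ ((\<pi> \<circ> \<sigma>h) (Inl j)) else 0)"
      unfolding Perm_def by (rule sum_permutations_compose_right[OF \<sigma>hp])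
    also have "\<dots> = (\<Sum>\<pi>\<in>Perm. if pat \<pi> = pat id then \<mu> $ (\<pi> (Inl (\<sigma> j))) else 0)"
      using patc unfolding \<sigma>h_def by (intro sum.cong) auto
    also have "\<dots> = \<Phi> \<mu> $ (\<sigma> j)" unfolding \<Phi>_def by simp
    finally show ?thesis using Phimu by simp
  qed
  define T where "T s \<epsilon> i = \<epsilon> ^ e i + s * \<mu> $ i * \<epsilon> ^ M" for s \<epsilon> :: real and i
  define X where "X s \<epsilon> \<pi> = (\<chi> j. a + T s \<epsilon> (\<pi> (Inl j)) *\<^sub>R (b - a))"
    for s \<epsilon> :: real and \<pi> :: "('k+'e) \<Rightarrow> ('k+'e)"
  define PQ where "PQ Q R = (\<forall>q<JJ Q. Pos (\<lambda>j. AA Q q $ j \<bullet> (b - a))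
      (BB Q q + (\<Sum>j\<in>UNIV. AA Q q $ j \<bullet> a)) R (UNIV :: 'k set))" for Q R
  have memPS: "\<And>Q y (Pr :: real^'d^'k \<Rightarrow> bool). Q = {x. Pr x} \<Longrightarrow> (y \<in> Q) = Pr y" by blast
  have memX: "X s \<epsilon> \<pi> \<in> Q \<longleftrightarrow> (\<forall>q\<in>{..<JJ Q}. 0 \<le> (BB Q q + (\<Sum>j\<in>UNIV. AA Q q $ j \<bullet> a)) +
      (\<Sum>j\<in>UNIV. (AA Q q $ j \<bullet> (b - a)) * (\<epsilon> ^ e (\<pi> (Inl j)) + (s * \<mu> $ (\<pi> (Inl j))) * \<epsilon> ^ M)))"
    if "Q \<in> P" for s \<epsilon> \<pi> Q
  proof -
    have "X s \<epsilon> \<pi> \<in> Q \<longleftrightarrow> (\<forall>q<JJ Q. AA Q q \<bullet> X s \<epsilon> \<pi> + BB Q q \<ge> 0)"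
      by (rule memPS) (use poly that in blast)
    also have "\<dots> \<longleftrightarrow> (\<forall>q\<in>{..<JJ Q}. 0 \<le> (BB Q q + (\<Sum>j\<in>UNIV. AA Q q $ j \<bullet> a)) +
      (\<Sum>j\<in>UNIV. (AA Q q $ j \<bullet> (b - a)) * (\<epsilon> ^ e (\<pi> (Inl j)) + (s * \<mu> $ (\<pi> (Inl j))) * \<epsilon> ^ M)))"
      unfolding X_def inner_X T_def by (simp only: add_ac lessThan_iff Ball_def)
    finally show ?thesis .
  qed
  have ev1: "eventually (\<lambda>\<epsilon>. X s \<epsilon> \<pi> \<in> Q \<longleftrightarrow> PQ Q (pat \<pi>)) (at_right 0)"
    if "Q \<in> P" "\<pi> \<in> Perm" for s \<pi> Q
  proof -
    have injp: "inj_on (\<lambda>j. e (\<pi> (Inl j))) UNIV"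
    proof -
      have "inj \<pi>" using that(2) unfolding Perm_def by (simp add: permutes_inj)
      then show ?thesis using einj by (auto simp: inj_def)
    qed
    have "eventually (\<lambda>\<epsilon>. \<forall>q\<in>{..<JJ Q}. (0 \<le> (BB Q q + (\<Sum>j\<in>UNIV. AA Q q $ j \<bullet> a)) +
      (\<Sum>j\<in>UNIV. (AA Q q $ j \<bullet> (b - a)) * (\<epsilon> ^ e (\<pi> (Inl j)) + (s * \<mu> $ (\<pi> (Inl j))) * \<epsilon> ^ M)))
      \<longleftrightarrow> Pos (\<lambda>j. AA Q q $ j \<bullet> (b - a)) (BB Q q + (\<Sum>j\<in>UNIV. AA Q q $ j \<bullet> a))
          (\<lambda>j j'. e (\<pi> (Inl j)) < e (\<pi> (Inl j'))) UNIV) (at_right 0)"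
      by (intro eventually_ball_finite ballI lead_sign) (use injp e1 eM in \<open>auto simp: M_def\<close>)
    then show ?thesis
      by eventually_elim (simp only: memX[OF that(1)] PQ_def pat_def Ball_def lessThan_iff, blast)
  qed
  have ev2: "eventually (\<lambda>\<epsilon>. \<forall>\<pi>\<in>Perm. \<forall>s\<in>{0,1}. \<forall>Q\<in>P. X s \<epsilon> \<pi> \<in> Q \<longleftrightarrow> PQ Q (pat \<pi>)) (at_right 0)"
    by (intro eventually_ball_finite ballI ev1) (use Permfin Pfin in auto)
  have ev3: "eventually (\<lambda>\<epsilon>::real. \<epsilon> < 1/2) (at_right 0)"
    unfolding eventually_at_right_field by (intro exI[of _ "1/2"]) auto
  have "eventually (\<lambda>\<epsilon>. (\<forall>\<pi>\<in>Perm. \<forall>s\<in>{0,1}. \<forall>Q\<in>P. X s \<epsilon> \<pi> \<in> Q \<longleftrightarrow> PQ Q (pat \<pi>)) \<and> 0 < \<epsilon> \<and> \<epsilon> < 1/2) (at_right 0)"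
    using ev2 ev3 eventually_at_right_less[of "0::real"] by eventually_elim auto
  then obtain \<epsilon> where \<epsilon>: "\<forall>\<pi>\<in>Perm. \<forall>s\<in>{0,1}. \<forall>Q\<in>P. X s \<epsilon> \<pi> \<in> Q \<longleftrightarrow> PQ Q (pat \<pi>)"
    "0 < \<epsilon>" "\<epsilon> < 1/2"
    using eventually_happens'[OF trivial_limit_at_right_real] by blast
  define w where "w i = a + T 0 \<epsilon> i *\<^sub>R (b - a)" for i
  define w' where "w' i = a + T 1 \<epsilon> i *\<^sub>R (b - a)" for i
  have absb: "\<bar>s * \<mu> $ i * \<epsilon> ^ M\<bar> \<le> \<epsilon> ^ M" if "s \<in> {0,1}" for s i
  proof -
    have "\<bar>s * \<mu> $ i\<bar> \<le> 1" using that mub[of i] by auto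
    moreover have "\<bar>s * \<mu> $ i * \<epsilon> ^ M\<bar> = \<bar>s * \<mu> $ i\<bar> * \<epsilon> ^ M" using \<epsilon>(2) by (simp add: abs_mult)
    moreover have "0 \<le> \<epsilon> ^ M" using \<epsilon>(2) by simp
    ultimately show ?thesis by (metis mult_le_cancel_right2 mult_right_mono mult_1)
  qed
  have Tb: "0 \<le> T s \<epsilon> i \<and> T s \<epsilon> i \<le> 1" if "s \<in> {0,1}" for s i
  proof -
    have p1: "\<epsilon> ^ e i \<le> \<epsilon> ^ 1" using \<epsilon> e1[of i] by (intro power_decreasing) auto
    have p2: "\<epsilon> ^ M \<le> \<epsilon> ^ e i" using \<epsilon> eM[of i] by (intro power_decreasing) auto
    have "- (\<epsilon> ^ M) \<le> s * \<mu> $ i * \<epsilon> ^ M \<and> s * \<mu> $ i * \<epsilon> ^ M \<le> \<epsilon> ^ M"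
      using absb[OF that, of i] unfolding abs_le_iff by linarith
    then show ?thesis using p1 p2 \<epsilon>(3) unfolding T_def by (simp only: power_one_right) linarith
  qed
  have rw: "range w \<subseteq> C" unfolding w_def using Tb[of 0] seg_mem ab(2) by blast
  have rw': "range w' \<subseteq> C" unfolding w'_def using Tb[of 1] seg_mem ab(2) by blast
  have Xw: "(\<chi> j. w (\<pi> (Inl j))) = X 0 \<epsilon> \<pi>" for \<pi> unfolding w_def X_def by simp
  have Xw': "(\<chi> j. w' (\<pi> (Inl j))) = X 1 \<epsilon> \<pi>" for \<pi> unfolding w'_def X_def by simp
  define D where "D \<pi> = (\<chi> j. \<mu> $ (\<pi> (Inl j)) *\<^sub>R (b - a))" for \<pi> :: "('k+'e) \<Rightarrow> ('k+'e)"
  have XD: "X 1 \<epsilon> \<pi> = X 0 \<epsilon> \<pi> + \<epsilon> ^ M *\<^sub>R D \<pi>" for \<pi>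
    unfolding X_def D_def T_def vec_eq_iff by (simp add: algebra_simps)
  have fib: "(\<Sum>\<pi>\<in>{x\<in>Perm. pat x = R}. f (X 1 \<epsilon> \<pi>)) = (\<Sum>\<pi>\<in>{x\<in>Perm. pat x = R}. f (X 0 \<epsilon> \<pi>))"
    if R: "R \<in> pat ` Perm" for R
  proof -
    obtain \<pi>1 where \<pi>1: "\<pi>1 \<in> Perm" "R = pat \<pi>1" using R by blast
    obtain Q where Q: "Q \<in> P" "X 0 \<epsilon> \<pi>1 \<in> Q" using Pcov by blast
    have PQ1: "PQ Q (pat \<pi>1)" using \<epsilon>(1) \<pi>1(1) Q by blast
    have inQ: "X s \<epsilon> \<pi> \<in> Q" if "\<pi> \<in> {x\<in>Perm. pat x = R}" "s \<in> {0,1}" for \<pi> s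
      using \<epsilon>(1) that Q(1) PQ1 \<pi>1(2) by auto
    obtain g c where gc: "linear g" "\<forall>x\<in>Q. f x = g x + c" using Paff Q(1) by blast
    have Dsum: "(\<Sum>\<pi>\<in>{x\<in>Perm. pat x = R}. D \<pi>) = 0"
    proof -
      have "(\<Sum>\<pi>\<in>{x\<in>Perm. pat x = R}. \<mu> $ (\<pi> (Inl j))) = 0" for j
        using K[OF \<pi>1(1), of j] \<pi>1(2) Permfin by (simp add: sum.inter_filter)
      then show ?thesis unfolding D_def vec_eq_iff
        by (simp add: sum_component scaleR_sum_left[symmetric])
    qed
    have "(\<Sum>\<pi>\<in>{x\<in>Perm. pat x = R}. f (X 1 \<epsilon> \<pi>))
        = (\<Sum>\<pi>\<in>{x\<in>Perm. pat x = R}. f (X 0 \<epsilon> \<pi>) + \<epsilon> ^ M *\<^sub>R g (D \<pi>))"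
    proof (rule sum.cong)
      fix \<pi> assume \<pi>: "\<pi> \<in> {x\<in>Perm. pat x = R}"
      have "f (X 1 \<epsilon> \<pi>) = g (X 1 \<epsilon> \<pi>) + c" using gc inQ[OF \<pi>, of 1] by simp
      also have "\<dots> = g (X 0 \<epsilon> \<pi>) + c + \<epsilon> ^ M *\<^sub>R g (D \<pi>)"
        unfolding XD using linear_add[OF gc(1)] linear_scale[OF gc(1)] by simp
      also have "\<dots> = f (X 0 \<epsilon> \<pi>) + \<epsilon> ^ M *\<^sub>R g (D \<pi>)" using gc inQ[OF \<pi>, of 0] by simp
      finally show "f (X 1 \<epsilon> \<pi>) = f (X 0 \<epsilon> \<pi>) + \<epsilon> ^ M *\<^sub>R g (D \<pi>)" .
    qed simp
    also have "\<dots> = (\<Sum>\<pi>\<in>{x\<in>Perm. pat x = R}. f (X 0 \<epsilon> \<pi>)) + \<epsilon> ^ M *\<^sub>R g (\<Sum>\<pi>\<in>{x\<in>Perm. pat x = R}. D \<pi>)"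
      by (simp add: sum.distrib scaleR_sum_right linear_sum[OF gc(1)])
    also have "\<dots> = (\<Sum>\<pi>\<in>{x\<in>Perm. pat x = R}. f (X 0 \<epsilon> \<pi>))"
      using Dsum linear_0[OF gc(1)] by simp
    finally show ?thesis .
  qed
  have sumeq: "(\<Sum>\<pi>\<in>Perm. f (X 1 \<epsilon> \<pi>)) = (\<Sum>\<pi>\<in>Perm. f (X 0 \<epsilon> \<pi>))"
  proof -
    have "(\<Sum>\<pi>\<in>Perm. f (X 1 \<epsilon> \<pi>)) = (\<Sum>R\<in>pat ` Perm. \<Sum>\<pi>\<in>{x\<in>Perm. pat x = R}. f (X 1 \<epsilon> \<pi>))"
      by (rule sum.group[symmetric]) (use Permfin in auto)
    also have "\<dots> = (\<Sum>R\<in>pat ` Perm. \<Sum>\<pi>\<in>{x\<in>Perm. pat x = R}. f (X 0 \<epsilon> \<pi>))"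
      using fib by (rule sum.cong[OF refl])
    also have "\<dots> = (\<Sum>\<pi>\<in>Perm. f (X 0 \<epsilon> \<pi>))"
      by (rule sum.group) (use Permfin in auto)
    finally show ?thesis .
  qed
  have jan: "janossy f w = janossy f w'"
    unfolding janossy_def Xw Xw' using sumeq unfolding Perm_def by simp
  obtain i0 where i0: "\<mu> $ i0 \<noteq> 0" using mu0 by (auto simp: vec_eq_iff)
  have ne: "point_mset w \<noteq> point_mset w'"
  proof
    assume eq: "point_mset w = point_mset w'"
    have "set_mset (point_mset w) = range w" "set_mset (point_mset w') = range w'"
      unfolding point_mset_def by simp_all
    then have "w i0 \<in> range w'" using eq by auto
    then obtain i where "w' i = w i0" by auto
    then have "T 1 \<epsilon> i *\<^sub>R (b - a) = T 0 \<epsilon> i0 *\<^sub>R (b - a)" unfolding w_def w'_def by simp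
    then have Teq: "T 1 \<epsilon> i = T 0 \<epsilon> i0" using ab(1) by simp
    have ab1: "\<bar>1 * \<mu> $ i * \<epsilon> ^ M\<bar> \<le> \<epsilon> ^ M" using absb[of 1 i] by simp
    show False
    proof (cases "i = i0")
      case True
      then show False using Teq i0 \<epsilon>(2) unfolding T_def by simp
    next
      case False
      then have "e i \<noteq> e i0" using einj by (auto simp: inj_def)
      then consider "e i < e i0" | "e i0 < e i" by linarith
      then show False
      proof cases
        case 1
        have "\<epsilon> ^ M < \<epsilon> ^ e i - \<epsilon> ^ e i0" using gap[OF \<epsilon>(2,3) 1 eM[of i0]] .
        then show False using Teq ab1 unfolding T_def by (auto simp: abs_le_iff)
      next
        case 2
        have "\<epsilon> ^ M < \<epsilon> ^ e i0 - \<epsilon> ^ e i" using gap[OF \<epsilon>(2,3) 2 eM[of i]] .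
        then show False using Teq ab1 unfolding T_def by (auto simp: abs_le_iff)
      qed
    qed
  qed
  show ?thesis using rw rw' ne jan by blast
qed

end
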